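(* The $\Bbbk$-linear monoidal functor $\mathcal{AW}\to\mathcal{AS}$ which is the identity on generating objects $a\ge1$ and sends the generating morphisms $M_{a,b},S_{a,b},X_{a,b},\omega_a$ of $\mathcal{AW}$ to the morphisms with the same names in $\mathcal{AS}$ is faithful and full; that is, $\mathcal{AW}$ is a full subcategory of $\mathcal{AS}$.
   Context: Let $\Bbbk$ be a commutative ring with $1$. The affine Schur category $\mathcal{AS}$ is the strict $\Bbbk$-linear monoidal category defined as follows. Generating objects: the integers $a\ge1$ (black strands of thickness $a$) and the elements $u\in\Bbbk$ (red strands labelled $u$); objects are finite words in these, tensor product being concatenation. Generating morphisms, for $a,b\ge1$, $u\in\Bbbk$: merge $M_{a,b}:(a,b)\to(a+b)$, split $S_{a,b}:(a+b)\to(a,b)$, crossing $X_{a,b}:(a,b)\to(b,a)$, dot $\omega_a:(a)\to(a)$, traverse-up $U_{a,u}:(a,u)\to(u,a)$, traverse-down $D_{u,a}:(u,a)\to(a,u)$. Conventions: a black strand of thickness $0$ is the unit object and any merge, split or crossing involving a thickness-$0$ strand is an identity. Derived morphisms: $\omega_{a,0}:=1_a$; $\omega_{a,r}:=M_{r,a-r}(\omega_r\otimes1_{a-r})S_{r,a-r}$ for $1\le r\le a$; $\omega_{a,r}:=0$ if $r<0$ or $r>a$; $S^{(a)},M^{(a)}$ iterated splits/merges between $(a)$ and $(1,\dots,1)$; $g_r(u):=\sum_{i=0}^{r}(-1)^i\big(\prod_{j=0}^{i-1}(u+j)\big)\omega_{r,r-i}$. Defining relations, for all $a,b,c,d,r\ge1$,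 $u\in\Bbbk$: (R1) $M_{a+b,c}(M_{a,b}\otimes1_c)=M_{a,b+c}(1_a\otimes M_{b,c})$, $(S_{a,b}\otimes1_c)S_{a+b,c}=(1_a\otimes S_{b,c})S_{a,b+c}$; (R2) if $a+c=b+d$: $S_{b,d}M_{a,c}=\sum(M_{s,c-t}\otimes M_{a-s,t})(1_s\otimes X_{a-s,c-t}\otimes1_t)(S_{s,a-s}\otimes S_{c-t,t})$ over $0\le s\le\min(a,b)$, $0\le t\le\min(c,d)$, $t-s=d-a$; (R3) $M_{a,b}S_{a,b}=\binom{a+b}{a}1_{a+b}$; (R4) $(\omega_b\otimes1_a)X_{a,b}=\sum_{t=0}^{\min(a,b)}t!\,(M_{t,b-t}\otimes M_{a-t,t})(1_t\otimes X_{a-t,b-t}\otimes1_t)(1_t\otimes1_{a-t}\otimes\omega_{b-t}\otimes1_t)(S_{t,a-t}\otimes S_{b-t,t})$ and $X_{b,a}(\omega_b\otimes1_a)=\sum_{t=0}^{\min(a,b)}t!\,(M_{t,a-t}\otimes M_{b-t,t})(1_t\otimes1_{a-t}\otimes\omega_{b-t}\otimes1_t)(1_t\otimes X_{b-t,a-t}\otimes1_t)(S_{t,b-t}\otimes S_{a-t,t})$; (R5) $S_{a,b}\omega_{a+b}=(\omega_a\otimes\omega_b)S_{a,b}$, $\omega_{a+b}M_{a,b}=M_{a,b}(\omega_a\otimes\omega_b)$; (R6) $M^{(a)}(\omega_1\otimes\cdots\otimes\omega_1)S^{(a)}=a!\,\omega_a$; (R7) $D_{u,r}U_{r,u}=g_r(u)\otimes1_u$,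 $U_{r,u}D_{u,r}=1_u\otimes g_r(u)$; (R8) $(D_{u,b}\otimes1_a)(1_u\otimes X_{a,b})(U_{a,u}\otimes1_b)=(1_b\otimes U_{a,u})(X_{a,b}\otimes1_u)(1_a\otimes D_{u,b})+\sum_{t=1}^{\min(a,b)}t!\,(M_{t,b-t}\otimes1_u\otimes M_{a-t,t})(1_t\otimes1_{b-t}\otimes U_{a-t,u}\otimes1_t)(1_t\otimes X_{a-t,b-t}\otimes1_u\otimes1_t)(1_t\otimes1_{a-t}\otimes D_{u,b-t}\otimes1_t)(S_{t,a-t}\otimes1_u\otimes S_{b-t,t})$; (R9) $(1_u\otimes S_{b,c})U_{b+c,u}=(U_{b,u}\otimes1_c)(1_b\otimes U_{c,u})(S_{b,c}\otimes1_u)$, $(S_{a,b}\otimes1_u)D_{u,a+b}=(1_a\otimes D_{u,b})(D_{u,a}\otimes1_b)(1_u\otimes S_{a,b})$, $D_{u,b+c}(1_u\otimes M_{b,c})=(M_{b,c}\otimes1_u)(1_b\otimes D_{u,c})(D_{u,b}\otimes1_c)$, $U_{a+b,u}(M_{a,b}\otimes1_u)=(1_u\otimes M_{a,b})(U_{a,u}\otimes1_b)(1_a\otimes U_{b,u})$. The affine web category $\mathcal{AW}$ is the strict $\Bbbk$-linear monoidal category with generating objects the integers $a\ge1$ only, generating morphisms $M_{a,b},S_{a,b},X_{a,b},\omega_a$ ($a,b\ge1$), and defining relations (R1)–(R6). *)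

theory Defs
  imports Main
begin

section \<open>Free k-linear strict monoidal categories given by generators and relations\<close>

text \<open>Generating objects: black strands of thickness a (a >= 1) and red strands labelled u.\<close>
datatype 'k ob = Blk nat | Red 'k

text \<open>Generating morphisms (the parameters are required to be >= 1 by the well-formedness
  predicates below).\<close>
datatype 'k gen = Mrg nat nat | Spl nat nat | Crs nat nat | Dot nat | Up nat 'k | Dn 'k nat

fun gdom :: "'k gen \<Rightarrow> 'k ob list" where
  "gdom (Mrg a b) = [Blk a, Blk b]"
| "gdom (Spl a b) = [Blk (a + b)]"
| "gdom (Crs a b) = [Blk a, Blk b]"
| "gdom (Dot a) = [Blk a]"
| "gdom (Up a u) = [Blk a, Red u]"
| "gdom (Dn u a) = [Red u, Blk a]"

fun gcod :: "'k gen \<Rightarrow> 'k ob list" where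
  "gcod (Mrg a b) = [Blk (a + b)]"
| "gcod (Spl a b) = [Blk a, Blk b]"
| "gcod (Crs a b) = [Blk b, Blk a]"
| "gcod (Dot a) = [Blk a]"
| "gcod (Up a u) = [Red u, Blk a]"
| "gcod (Dn u a) = [Blk a, Red u]"

text \<open>Formal terms: identities, generators, composition (Comp f g = f after g), tensor
  product, zero, sum and scalar multiple.\<close>
datatype 'k tm = Idt "'k ob list" | Gn "'k gen" | Comp "'k tm" "'k tm" | Tens "'k tm" "'k tm"
  | Zer "'k ob list" "'k ob list" | Add "'k tm" "'k tm" | Scal 'k "'k tm"

fun tdom :: "'k tm \<Rightarrow> 'k ob list" and tcod :: "'k tm \<Rightarrow> 'k ob list" where
  "tdom (Idt a) = a"
| "tdom (Gn g) = gdom g"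
| "tdom (Comp f g) = tdom g"
| "tdom (Tens f g) = tdom f @ tdom g"
| "tdom (Zer d c) = d"
| "tdom (Add f g) = tdom f"
| "tdom (Scal k f) = tdom f"
| "tcod (Idt a) = a"
| "tcod (Gn g) = gcod g"
| "tcod (Comp f g) = tcod f"
| "tcod (Tens f g) = tcod f @ tcod g"
| "tcod (Zer d c) = c"
| "tcod (Add f g) = tcod f"
| "tcod (Scal k f) = tcod f"

fun wft :: "('k ob \<Rightarrow> bool) \<Rightarrow> ('k gen \<Rightarrow> bool) \<Rightarrow> 'k tm \<Rightarrow> bool" where
  "wft P Q (Idt a) = list_all P a"
| "wft P Q (Gn g) = Q g"
| "wft P Q (Comp f g) = (wft P Q f \<and> wft P Q g \<and> tdom f = tcod g)"
| "wft P Q (Tens f g) = (wft P Q f \<and> wft P Q g)"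
| "wft P Q (Zer d c) = (list_all P d \<and> list_all P c)"
| "wft P Q (Add f g) = (wft P Q f \<and> wft P Q g \<and> tdom f = tdom g \<and> tcod f = tcod g)"
| "wft P Q (Scal k f) = wft P Q f"

text \<open>The congruence generated by the axioms of a strict k-linear monoidal category and by
  a set R of defining relations: two well-formed terms are equal as morphisms of the
  presented category iff they are related by eqv.\<close>
inductive eqv :: "('k::comm_ring_1 ob \<Rightarrow> bool) \<Rightarrow> ('k gen \<Rightarrow> bool) \<Rightarrow> ('k tm \<times> 'k tm) set
    \<Rightarrow> 'k tm \<Rightarrow> 'k tm \<Rightarrow> bool" for P Q R where
  refl: "wft P Q f \<Longrightarrow> eqv P Q R f f"
| sym: "eqv P Q R f g \<Longrightarrow> eqv P Q R g f"
| trans: "eqv P Q R f g \<Longrightarrow> eqv P Q R g h \<Longrightarrow> eqv P Q R f h"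
| cong_comp: "eqv P Q R f f' \<Longrightarrow> eqv P Q R g g' \<Longrightarrow> tdom f = tcod g
    \<Longrightarrow> eqv P Q R (Comp f g) (Comp f' g')"
| cong_tens: "eqv P Q R f f' \<Longrightarrow> eqv P Q R g g' \<Longrightarrow> eqv P Q R (Tens f g) (Tens f' g')"
| cong_add: "eqv P Q R f f' \<Longrightarrow> eqv P Q R g g' \<Longrightarrow> tdom f = tdom g \<Longrightarrow> tcod f = tcod g
    \<Longrightarrow> eqv P Q R (Add f g) (Add f' g')"
| cong_scal: "eqv P Q R f f' \<Longrightarrow> eqv P Q R (Scal c f) (Scal c f')"
| comp_assoc: "wft P Q f \<Longrightarrow> wft P Q g \<Longrightarrow> wft P Q h \<Longrightarrow> tdom f = tcod g \<Longrightarrow> tdom g = tcod h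
    \<Longrightarrow> eqv P Q R (Comp (Comp f g) h) (Comp f (Comp g h))"
| comp_id_l: "wft P Q f \<Longrightarrow> eqv P Q R (Comp (Idt (tcod f)) f) f"
| comp_id_r: "wft P Q f \<Longrightarrow> eqv P Q R (Comp f (Idt (tdom f))) f"
| tens_assoc: "wft P Q f \<Longrightarrow> wft P Q g \<Longrightarrow> wft P Q h
    \<Longrightarrow> eqv P Q R (Tens (Tens f g) h) (Tens f (Tens g h))"
| tens_unit_l: "wft P Q f \<Longrightarrow> eqv P Q R (Tens (Idt []) f) f"
| tens_unit_r: "wft P Q f \<Longrightarrow> eqv P Q R (Tens f (Idt [])) f"
| tens_id: "list_all P a \<Longrightarrow> list_all P b \<Longrightarrow> eqv P Q R (Tens (Idt a) (Idt b)) (Idt (a @ b))"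
| interchange: "wft P Q f \<Longrightarrow> wft P Q f' \<Longrightarrow> wft P Q g \<Longrightarrow> wft P Q g'
    \<Longrightarrow> tdom f = tcod f' \<Longrightarrow> tdom g = tcod g'
    \<Longrightarrow> eqv P Q R (Comp (Tens f g) (Tens f' g')) (Tens (Comp f f') (Comp g g'))"
| add_assoc: "wft P Q (Add (Add f g) h) \<Longrightarrow> eqv P Q R (Add (Add f g) h) (Add f (Add g h))"
| add_comm: "wft P Q (Add f g) \<Longrightarrow> eqv P Q R (Add f g) (Add g f)"
| add_zero: "wft P Q f \<Longrightarrow> eqv P Q R (Add f (Zer (tdom f) (tcod f))) f"
| scal_one: "wft P Q f \<Longrightarrow> eqv P Q R (Scal 1 f) f"
| scal_zero: "wft P Q f \<Longrightarrow> eqv P Q R (Scal 0 f) (Zer (tdom f) (tcod f))"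
| scal_scal: "wft P Q f \<Longrightarrow> eqv P Q R (Scal a (Scal b f)) (Scal (a * b) f)"
| scal_add_l: "wft P Q f \<Longrightarrow> eqv P Q R (Scal (a + b) f) (Add (Scal a f) (Scal b f))"
| scal_add_r: "wft P Q (Add f g) \<Longrightarrow> eqv P Q R (Scal a (Add f g)) (Add (Scal a f) (Scal a g))"
| comp_add_l: "wft P Q (Comp (Add f g) h) \<Longrightarrow> eqv P Q R (Comp (Add f g) h) (Add (Comp f h) (Comp g h))"
| comp_add_r: "wft P Q (Comp h (Add f g)) \<Longrightarrow> eqv P Q R (Comp h (Add f g)) (Add (Comp h f) (Comp h g))"
| comp_scal_l: "wft P Q (Comp f g) \<Longrightarrow> eqv P Q R (Comp (Scal c f) g) (Scal c (Comp f g))"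
| comp_scal_r: "wft P Q (Comp f g) \<Longrightarrow> eqv P Q R (Comp f (Scal c g)) (Scal c (Comp f g))"
| tens_add_l: "wft P Q (Tens (Add f g) h) \<Longrightarrow> eqv P Q R (Tens (Add f g) h) (Add (Tens f h) (Tens g h))"
| tens_add_r: "wft P Q (Tens h (Add f g)) \<Longrightarrow> eqv P Q R (Tens h (Add f g)) (Add (Tens h f) (Tens h g))"
| tens_scal_l: "wft P Q (Tens f g) \<Longrightarrow> eqv P Q R (Tens (Scal c f) g) (Scal c (Tens f g))"
| tens_scal_r: "wft P Q (Tens f g) \<Longrightarrow> eqv P Q R (Tens f (Scal c g)) (Scal c (Tens f g))"
| rel: "(f, g) \<in> R \<Longrightarrow> wft P Q f \<Longrightarrow> wft P Q g \<Longrightarrow> tdom f = tdom g \<Longrightarrow> tcod f = tcod g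
    \<Longrightarrow> eqv P Q R f g"

fun ASob :: "'k ob \<Rightarrow> bool" where
  "ASob (Blk a) = (a \<ge> 1)"
| "ASob (Red u) = True"

fun AWob :: "'k ob \<Rightarrow> bool" where
  "AWob (Blk a) = (a \<ge> 1)"
| "AWob (Red u) = False"

fun ASgen :: "'k gen \<Rightarrow> bool" where
  "ASgen (Mrg a b) = (a \<ge> 1 \<and> b \<ge> 1)"
| "ASgen (Spl a b) = (a \<ge> 1 \<and> b \<ge> 1)"
| "ASgen (Crs a b) = (a \<ge> 1 \<and> b \<ge> 1)"
| "ASgen (Dot a) = (a \<ge> 1)"
| "ASgen (Up a u) = (a \<ge> 1)"
| "ASgen (Dn u a) = (a \<ge> 1)"

fun AWgen :: "'k gen \<Rightarrow> bool" where
  "AWgen (Mrg a b) = (a \<ge> 1 \<and> b \<ge> 1)"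
| "AWgen (Spl a b) = (a \<ge> 1 \<and> b \<ge> 1)"
| "AWgen (Crs a b) = (a \<ge> 1 \<and> b \<ge> 1)"
| "AWgen (Dot a) = (a \<ge> 1)"
| "AWgen (Up a u) = False"
| "AWgen (Dn u a) = False"

section \<open>Shorthands, with the thickness-0 conventions\<close>

definition blk :: "nat \<Rightarrow> 'k ob list" where
  "blk a = (if a = 0 then [] else [Blk a])"

definition idb :: "nat \<Rightarrow> 'k tm" where "idb a = Idt (blk a)"

definition idr :: "'k \<Rightarrow> 'k tm" where "idr u = Idt [Red u]"

definition mrg :: "nat \<Rightarrow> nat \<Rightarrow> 'k tm" where
  "mrg a b = (if a = 0 \<or> b = 0 then idb (a + b) else Gn (Mrg a b))"

definition spl :: "nat \<Rightarrow> nat \<Rightarrow> 'k tm" where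
  "spl a b = (if a = 0 \<or> b = 0 then idb (a + b) else Gn (Spl a b))"

definition crs :: "nat \<Rightarrow> nat \<Rightarrow> 'k tm" where
  "crs a b = (if a = 0 \<or> b = 0 then Idt (blk a @ blk b) else Gn (Crs a b))"

definition dot :: "nat \<Rightarrow> 'k tm" where
  "dot a = (if a = 0 then Idt [] else Gn (Dot a))"

definition trU :: "nat \<Rightarrow> 'k \<Rightarrow> 'k tm" where
  "trU a u = (if a = 0 then idr u else Gn (Up a u))"

definition trD :: "'k \<Rightarrow> nat \<Rightarrow> 'k tm" where
  "trD u a = (if a = 0 then idr u else Gn (Dn u a))"

definition tsum :: "'k ob list \<Rightarrow> 'k ob list \<Rightarrow> 'k tm list \<Rightarrow> 'k tm" where
  "tsum d c fs = foldr Add fs (Zer d c)"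

text \<open>tcomps [f1, ..., fn] = f1 after ... after fn (n >= 1).\<close>
fun tcomps :: "'k tm list \<Rightarrow> 'k tm" where
  "tcomps [] = Idt []"
| "tcomps [f] = f"
| "tcomps (f # g # fs) = Comp f (tcomps (g # fs))"

definition omega :: "nat \<Rightarrow> nat \<Rightarrow> 'k tm" where
  "omega a r = (if r = 0 then idb a else if a < r then Zer (blk a) (blk a)
     else Comp (mrg r (a - r)) (Comp (Tens (dot r) (idb (a - r))) (spl r (a - r))))"

fun spl_it :: "nat \<Rightarrow> 'k tm" where
  "spl_it 0 = Idt []"
| "spl_it (Suc n) = Comp (Tens (idb 1) (spl_it n)) (spl 1 n)"

fun mrg_it :: "nat \<Rightarrow> 'k tm" where
  "mrg_it 0 = Idt []"
| "mrg_it (Suc n) = Comp (mrg 1 n) (Tens (idb 1) (mrg_it n))"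

fun dots :: "nat \<Rightarrow> 'k tm" where
  "dots 0 = Idt []"
| "dots (Suc n) = Tens (dot 1) (dots n)"

definition gpol :: "nat \<Rightarrow> 'k::comm_ring_1 \<Rightarrow> 'k tm" where
  "gpol r u = tsum (blk r) (blk r)
     [Scal ((-1) ^ i * (\<Prod>j<i. u + of_nat j)) (omega r (r - i)). i \<leftarrow> [0..<Suc r]]"

definition R1 :: "nat \<Rightarrow> nat \<Rightarrow> nat \<Rightarrow> ('k tm \<times> 'k tm) list" where
  "R1 a b c =
    [(Comp (mrg (a + b) c) (Tens (mrg a b) (idb c)), Comp (mrg a (b + c)) (Tens (idb a) (mrg b c))),
     (Comp (Tens (spl a b) (idb c)) (spl (a + b) c), Comp (Tens (idb a) (spl b c)) (spl a (b + c)))]"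

definition R2 :: "nat \<Rightarrow> nat \<Rightarrow> nat \<Rightarrow> nat \<Rightarrow> ('k tm \<times> 'k tm) list" where
  "R2 a b c d =
    [(Comp (spl b d) (mrg a c),
      tsum [Blk a, Blk c] [Blk b, Blk d]
        [tcomps [Tens (mrg s (c - t)) (mrg (a - s) t),
                 Tens (idb s) (Tens (crs (a - s) (c - t)) (idb t)),
                 Tens (spl s (a - s)) (spl (c - t) t)].
          s \<leftarrow> [0..<Suc (min a b)], t \<leftarrow> [0..<Suc (min c d)], int t - int s = int d - int a])]"

definition R3 :: "nat \<Rightarrow> nat \<Rightarrow> ('k::comm_ring_1 tm \<times> 'k tm) list" where
  "R3 a b = [(Comp (mrg a b) (spl a b), Scal (of_nat ((a + b) choose a)) (idb (a + b)))]"

definition R4 :: "nat \<Rightarrow> nat \<Rightarrow> ('k::comm_ring_1 tm \<times> 'k tm) list" where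
  "R4 a b =
    [(Comp (Tens (dot b) (idb a)) (crs a b),
      tsum [Blk a, Blk b] [Blk b, Blk a]
        [Scal (of_nat (fact t)) (tcomps
           [Tens (mrg t (b - t)) (mrg (a - t) t),
            Tens (idb t) (Tens (crs (a - t) (b - t)) (idb t)),
            Tens (idb t) (Tens (idb (a - t)) (Tens (dot (b - t)) (idb t))),
            Tens (spl t (a - t)) (spl (b - t) t)]). t \<leftarrow> [0..<Suc (min a b)]]),
     (Comp (crs b a) (Tens (dot b) (idb a)),
      tsum [Blk b, Blk a] [Blk a, Blk b]
        [Scal (of_nat (fact t)) (tcomps
           [Tens (mrg t (a - t)) (mrg (b - t) t),
            Tens (idb t) (Tens (idb (a - t)) (Tens (dot (b - t)) (idb t))),
            Tens (idb t) (Tens (crs (b - t) (a - t)) (idb t)),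
            Tens (spl t (b - t)) (spl (a - t) t)]). t \<leftarrow> [0..<Suc (min a b)]])]"

definition R5 :: "nat \<Rightarrow> nat \<Rightarrow> ('k tm \<times> 'k tm) list" where
  "R5 a b =
    [(Comp (spl a b) (dot (a + b)), Comp (Tens (dot a) (dot b)) (spl a b)),
     (Comp (dot (a + b)) (mrg a b), Comp (mrg a b) (Tens (dot a) (dot b)))]"

definition R6 :: "nat \<Rightarrow> ('k::comm_ring_1 tm \<times> 'k tm) list" where
  "R6 a = [(tcomps [mrg_it a, dots a, spl_it a], Scal (of_nat (fact a)) (dot a))]"

definition R7 :: "nat \<Rightarrow> 'k::comm_ring_1 \<Rightarrow> ('k tm \<times> 'k tm) list" where
  "R7 r u =
    [(Comp (trD u r) (trU r u), Tens (gpol r u) (idr u)),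
     (Comp (trU r u) (trD u r), Tens (idr u) (gpol r u))]"

definition R8 :: "nat \<Rightarrow> nat \<Rightarrow> 'k::comm_ring_1 \<Rightarrow> ('k tm \<times> 'k tm) list" where
  "R8 a b u =
    [(tcomps [Tens (trD u b) (idb a), Tens (idr u) (crs a b), Tens (trU a u) (idb b)],
      Add (tcomps [Tens (idb b) (trU a u), Tens (crs a b) (idr u), Tens (idb a) (trD u b)])
       (tsum [Blk a, Red u, Blk b] [Blk b, Red u, Blk a]
         [Scal (of_nat (fact t)) (tcomps
           [Tens (mrg t (b - t)) (Tens (idr u) (mrg (a - t) t)),
            Tens (idb t) (Tens (idb (b - t)) (Tens (trU (a - t) u) (idb t))),
            Tens (idb t) (Tens (crs (a - t) (b - t)) (Tens (idr u) (idb t))),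
            Tens (idb t) (Tens (idb (a - t)) (Tens (trD u (b - t)) (idb t))),
            Tens (spl t (a - t)) (Tens (idr u) (spl (b - t) t))]). t \<leftarrow> [1..<Suc (min a b)]]))]"

definition R9 :: "nat \<Rightarrow> nat \<Rightarrow> 'k \<Rightarrow> ('k tm \<times> 'k tm) list" where
  "R9 b c u =
    [(Comp (Tens (idr u) (spl b c)) (trU (b + c) u),
      tcomps [Tens (trU b u) (idb c), Tens (idb b) (trU c u), Tens (spl b c) (idr u)]),
     (Comp (Tens (spl b c) (idr u)) (trD u (b + c)),
      tcomps [Tens (idb b) (trD u c), Tens (trD u b) (idb c), Tens (idr u) (spl b c)]),
     (Comp (trD u (b + c)) (Tens (idr u) (mrg b c)),
      tcomps [Tens (mrg b c) (idr u), Tens (idb b) (trD u c), Tens (trD u b) (idb c)]),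
     (Comp (trU (b + c) u) (Tens (mrg b c) (idr u)),
      tcomps [Tens (idr u) (mrg b c), Tens (trU b u) (idb c), Tens (idb b) (trU c u)])]"

definition AW_rels :: "('k::comm_ring_1 tm \<times> 'k tm) set" where
  "AW_rels = {p. \<exists>a b c d. a \<ge> 1 \<and> b \<ge> 1 \<and> c \<ge> 1 \<and> d \<ge> 1 \<and>
      (p \<in> set (R1 a b c) \<or> (a + c = b + d \<and> p \<in> set (R2 a b c d)) \<or> p \<in> set (R3 a b)
       \<or> p \<in> set (R4 a b) \<or> p \<in> set (R5 a b) \<or> p \<in> set (R6 a))}"

definition AS_rels :: "('k::comm_ring_1 tm \<times> 'k tm) set" where
  "AS_rels = AW_rels \<union> {p. \<exists>a b u. a \<ge> 1 \<and> b \<ge> 1 \<and>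
      (p \<in> set (R7 a u) \<or> p \<in> set (R8 a b u) \<or> p \<in> set (R9 a b u))}"

text \<open>Morphisms of AW (resp. AS) from x to y: well-formed terms over AWob/AWgen
  (resp. ASob/ASgen) with domain x and codomain y, modulo eqv AWob AWgen AW_rels
  (resp. eqv ASob ASgen AS_rels).\<close>

abbreviation AW_eq :: "'k::comm_ring_1 tm \<Rightarrow> 'k tm \<Rightarrow> bool" where
  "AW_eq \<equiv> eqv AWob AWgen AW_rels"

abbreviation AS_eq :: "'k::comm_ring_1 tm \<Rightarrow> 'k tm \<Rightarrow> bool" where
  "AS_eq \<equiv> eqv ASob ASgen AS_rels"

end

theory Submission
  imports Defs
begin

fun isB :: "'k ob \<Rightarrow> bool" where
  "isB (Blk a) = True" | "isB (Red u) = False"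

definition bl :: "'k ob list \<Rightarrow> 'k ob list" where "bl xs = filter isB xs"
definition rdl :: "'k ob list \<Rightarrow> bool" where "rdl xs = (\<not> list_all isB xs)"
definition rd :: "'k tm \<Rightarrow> bool" where "rd h = (rdl (tdom h) \<or> rdl (tcod h))"
definition zr :: "'k tm \<Rightarrow> 'k tm" where "zr h = Zer (bl (tdom h)) (bl (tcod h))"
definition rc :: "'k ob list \<Rightarrow> nat" where "rc xs = length (filter (\<lambda>x. \<not> isB x) xs)"

fun Phi :: "'k tm \<Rightarrow> 'k tm" where
  "Phi (Idt a) = (if rdl a then zr (Idt a) else Idt a)"
| "Phi (Gn g) = (if rd (Gn g) then zr (Gn g) else Gn g)"
| "Phi (Comp f g) = Comp (Phi f) (Phi g)"
| "Phi (Tens f g) = Tens (Phi f) (Phi g)"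
| "Phi (Zer d c) = Zer (bl d) (bl c)"
| "Phi (Add f g) = Add (Phi f) (Phi g)"
| "Phi (Scal k f) = Scal k (Phi f)"

lemma bl_id: "\<not> rdl xs \<Longrightarrow> bl xs = xs"
  by (simp add: bl_def rdl_def list_all_iff filter_id_conv)

lemma rdl_app[simp]: "rdl (a @ b) = (rdl a \<or> rdl b)"
  by (simp add: rdl_def)
lemma bl_app[simp]: "bl (a @ b) = bl a @ bl b" by (simp add: bl_def)

lemma rdl_rc: "rdl xs = (rc xs > 0)"
  by (auto simp: rdl_def rc_def list_all_iff filter_empty_conv)

lemma rc_app[simp]: "rc (a @ b) = rc a + rc b" by (simp add: rc_def)

declare eqv.trans[trans]


lemma Phi_dom: "tdom (Phi h) = bl (tdom h) \<and> tcod (Phi h) = bl (tcod h)"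
  by (induction h) (auto simp: zr_def rd_def bl_id)

lemma ASob_AW: "list_all ASob xs \<Longrightarrow> list_all AWob (bl xs)"
proof (induction xs)
  case (Cons x xs) then show ?case by (cases x) (auto simp: bl_def)
qed (simp add: bl_def)

lemma ASob_AW2: "list_all ASob xs \<Longrightarrow> \<not> rdl xs \<Longrightarrow> list_all AWob xs"
  using ASob_AW bl_id by metis

lemma wft_lists:
  assumes hQ: "\<And>g. Q g \<Longrightarrow> list_all P (gdom g) \<and> list_all P (gcod g)"
  shows "wft P Q f \<Longrightarrow> list_all P (tdom f) \<and> list_all P (tcod f)"
  by (induction f) (auto dest: hQ)

lemma hQ_AS: "ASgen g \<Longrightarrow> list_all ASob (gdom g) \<and> list_all ASob (gcod g)"
  by (cases g) auto
lemma hQ_AW: "AWgen g \<Longrightarrow> list_all AWob (gdom g) \<and> list_all AWob (gcod g)"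
  by (cases g) auto

lemma rc_gen: "rc (gdom g) = rc (gcod g)"
  by (cases g) (auto simp: rc_def)

lemma triv_AS: "\<And>g. ASgen g \<Longrightarrow> ASgen g" .
lemma triv_AW: "\<And>g. AWgen g \<Longrightarrow> AWgen g" .

lemmas wl_AS = wft_lists[where P=ASob and Q=ASgen, OF hQ_AS, OF triv_AS]
lemmas wl_AW = wft_lists[where P=AWob and Q=AWgen, OF hQ_AW, OF triv_AW]

lemma zr_wft: "wft ASob ASgen h \<Longrightarrow> wft AWob AWgen (zr h)"
  using wl_AS[of h] by (simp add: zr_def ASob_AW)



lemma wft_mono: "wft P Q f \<Longrightarrow> (\<And>x. P x \<Longrightarrow> P' x) \<Longrightarrow> (\<And>x. Q x \<Longrightarrow> Q' x) \<Longrightarrow> wft P' Q' f"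
  by (induction f) (auto simp: list_all_iff)

lemma eqv_mono:
  assumes "eqv P Q R f g" "\<And>x. P x \<Longrightarrow> P' x" "\<And>x. Q x \<Longrightarrow> Q' x" "R \<subseteq> R'"
  shows "eqv P' Q' R' f g"
  using assms(1)
proof (induction rule: eqv.induct)
qed (auto intro: eqv.intros wft_mono[OF _ assms(2,3)] simp: list_all_iff assms(2) dest!: subsetD[OF assms(4)]
   simp del: wft.simps)

context
  fixes P :: "'k::comm_ring_1 ob \<Rightarrow> bool" and Q :: "'k gen \<Rightarrow> bool" and R :: "('k tm \<times> 'k tm) set"
  assumes hQ: "\<And>g. Q g \<Longrightarrow> list_all P (gdom g) \<and> list_all P (gcod g)"
begin

lemma wl: "wft P Q f \<Longrightarrow> list_all P (tdom f) \<and> list_all P (tcod f)"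
  using wft_lists hQ by blast

lemma eqv_pres: "eqv P Q R f g \<Longrightarrow> wft P Q f \<and> wft P Q g \<and> tdom f = tdom g \<and> tcod f = tcod g"
  by (induction rule: eqv.induct) (auto dest: wl)

lemma z_scal0: "list_all P d \<Longrightarrow> list_all P c \<Longrightarrow> eqv P Q R (Zer d c) (Scal 0 (Zer d c))"
  by (rule eqv.sym) (metis eqv.scal_zero tdom.simps(5) tcod.simps(5) wft.simps(5))

lemma zcl: "eqv P Q R f (Zer m c) \<Longrightarrow> wft P Q x \<Longrightarrow> tcod x = m
   \<Longrightarrow> eqv P Q R (Comp f x) (Zer (tdom x) c)"
proof -
  assume f: "eqv P Q R f (Zer m c)" and x: "wft P Q x" and m: "tcod x = m"
  have lm: "list_all P m" "list_all P c" using eqv_pres[OF f] by auto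
  have "eqv P Q R (Comp f x) (Comp (Scal 0 (Zer m c)) x)"
    using eqv.trans[OF f z_scal0[OF lm]] eqv.refl[OF x] eqv_pres[OF f] m
    by (auto intro: eqv.cong_comp)
  also have "eqv P Q R (Comp (Scal 0 (Zer m c)) x) (Scal 0 (Comp (Zer m c) x))"
    using lm x m by (intro eqv.comp_scal_l) auto
  also have "eqv P Q R (Scal 0 (Comp (Zer m c) x)) (Zer (tdom x) c)"
    using eqv.scal_zero[of P Q "Comp (Zer m c) x" R] lm x m by auto
  finally show ?thesis .
qed

lemma zcr: "eqv P Q R f (Zer d m) \<Longrightarrow> wft P Q x \<Longrightarrow> tdom x = m
   \<Longrightarrow> eqv P Q R (Comp x f) (Zer d (tcod x))"
proof -
  assume f: "eqv P Q R f (Zer d m)" and x: "wft P Q x" and m: "tdom x = m"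
  have lm: "list_all P m" "list_all P d" using eqv_pres[OF f] by auto
  have "eqv P Q R (Comp x f) (Comp x (Scal 0 (Zer d m)))"
    using eqv.trans[OF f z_scal0[OF lm(2,1)]] eqv.refl[OF x] eqv_pres[OF f] m
    by (auto intro: eqv.cong_comp)
  also have "eqv P Q R (Comp x (Scal 0 (Zer d m))) (Scal 0 (Comp x (Zer d m)))"
    using lm x m by (intro eqv.comp_scal_r) auto
  also have "eqv P Q R (Scal 0 (Comp x (Zer d m))) (Zer d (tcod x))"
    using eqv.scal_zero[of P Q "Comp x (Zer d m)" R] lm x m by auto
  finally show ?thesis .
qed

lemma ztl: "eqv P Q R f (Zer d c) \<Longrightarrow> wft P Q x
   \<Longrightarrow> eqv P Q R (Tens f x) (Zer (d @ tdom x) (c @ tcod x))"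
proof -
  assume f: "eqv P Q R f (Zer d c)" and x: "wft P Q x"
  have lm: "list_all P d" "list_all P c" using eqv_pres[OF f] by auto
  have "eqv P Q R (Tens f x) (Tens (Scal 0 (Zer d c)) x)"
    using eqv.trans[OF f z_scal0[OF lm]] eqv.refl[OF x]
    by (auto intro: eqv.cong_tens)
  also have "eqv P Q R (Tens (Scal 0 (Zer d c)) x) (Scal 0 (Tens (Zer d c) x))"
    using lm x by (intro eqv.tens_scal_l) auto
  also have "eqv P Q R (Scal 0 (Tens (Zer d c) x)) (Zer (d @ tdom x) (c @ tcod x))"
    using eqv.scal_zero[of P Q "Tens (Zer d c) x" R] lm x by auto
  finally show ?thesis .
qed

lemma ztr: "eqv P Q R f (Zer d c) \<Longrightarrow> wft P Q x
   \<Longrightarrow> eqv P Q R (Tens x f) (Zer (tdom x @ d) (tcod x @ c))"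
proof -
  assume f: "eqv P Q R f (Zer d c)" and x: "wft P Q x"
  have lm: "list_all P d" "list_all P c" using eqv_pres[OF f] by auto
  have "eqv P Q R (Tens x f) (Tens x (Scal 0 (Zer d c)))"
    using eqv.trans[OF f z_scal0[OF lm]] eqv.refl[OF x]
    by (auto intro: eqv.cong_tens)
  also have "eqv P Q R (Tens x (Scal 0 (Zer d c))) (Scal 0 (Tens x (Zer d c)))"
    using lm x by (intro eqv.tens_scal_r) auto
  also have "eqv P Q R (Scal 0 (Tens x (Zer d c))) (Zer (tdom x @ d) (tcod x @ c))"
    using eqv.scal_zero[of P Q "Tens x (Zer d c)" R] lm x by auto
  finally show ?thesis .
qed

lemma zadd: "eqv P Q R f (Zer d c) \<Longrightarrow> eqv P Q R g (Zer d c)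
   \<Longrightarrow> eqv P Q R (Add f g) (Zer d c)"
proof -
  assume f: "eqv P Q R f (Zer d c)" and g: "eqv P Q R g (Zer d c)"
  have lm: "list_all P d" "list_all P c" using eqv_pres[OF f] by auto
  have "eqv P Q R (Add f g) (Add (Zer d c) (Zer d c))"
    using f g eqv_pres[OF f] eqv_pres[OF g] by (auto intro: eqv.cong_add)
  also have "eqv P Q R (Add (Zer d c) (Zer d c)) (Zer d c)"
    using eqv.add_zero[of P Q "Zer d c" R] lm by auto
  finally show ?thesis .
qed

lemma zscal: "eqv P Q R f (Zer d c) \<Longrightarrow> eqv P Q R (Scal a f) (Zer d c)"
proof -
  assume f: "eqv P Q R f (Zer d c)"
  have lm: "list_all P d" "list_all P c" using eqv_pres[OF f] by auto
  have "eqv P Q R (Scal a f) (Scal a (Scal 0 (Zer d c)))"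
    using eqv.trans[OF f z_scal0[OF lm]] by (auto intro: eqv.cong_scal)
  also have "eqv P Q R (Scal a (Scal 0 (Zer d c))) (Scal 0 (Zer d c))"
    using eqv.scal_scal[of P Q "Zer d c" R a 0] lm by auto
  also have "eqv P Q R (Scal 0 (Zer d c)) (Zer d c)"
    using eqv.sym[OF z_scal0[OF lm]] .
  finally show ?thesis .
qed

lemma rcmis: "wft P Q h \<Longrightarrow> (\<And>g. Q g \<Longrightarrow> rc (gdom g) = rc (gcod g)) \<Longrightarrow> rc (tdom h) \<noteq> rc (tcod h)
   \<Longrightarrow> eqv P Q R h (Zer (tdom h) (tcod h))"
proof (induction h)
  case (Zer d c) then show ?case by (auto intro: eqv.refl)
next
  case (Comp f g)
  show ?case
  proof (cases "rc (tdom f) = rc (tcod f)")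
    case True
    then have "eqv P Q R g (Zer (tdom g) (tcod g))" using Comp by auto
    then show ?thesis using zcr[of g "tdom g" "tcod g" f] Comp.prems by auto
  next
    case False
    then have "eqv P Q R f (Zer (tdom f) (tcod f))" using Comp by auto
    then show ?thesis using zcl[of f "tdom f" "tcod f" g] Comp.prems by auto
  qed
next
  case (Tens f g)
  show ?case
  proof (cases "rc (tdom f) = rc (tcod f)")
    case True
    then have "eqv P Q R g (Zer (tdom g) (tcod g))" using Tens by auto
    then show ?thesis using ztr[of g "tdom g" "tcod g" f] Tens.prems by auto
  next
    case False
    then have "eqv P Q R f (Zer (tdom f) (tcod f))" using Tens by auto
    then show ?thesis using ztl[of f "tdom f" "tcod f" g] Tens.prems by auto
  qed
next
  case (Add f g)
  then have "eqv P Q R f (Zer (tdom f) (tcod f))" "eqv P Q R g (Zer (tdom f) (tcod f))" by auto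
  then show ?case using zadd by auto
next
  case (Scal a f)
  then show ?case using zscal by auto
qed auto

end


lemma zcl_AS: "eqv ASob ASgen AS_rels f (Zer m c) \<Longrightarrow> wft ASob ASgen x \<Longrightarrow> tcod x = m \<Longrightarrow> eqv ASob ASgen AS_rels (Comp f x) (Zer (tdom x) c)"
  by (rule zcl[where P=ASob and Q=ASgen and R=AS_rels]) (auto dest: hQ_AS)
lemma zcl_AW: "eqv AWob AWgen AW_rels f (Zer m c) \<Longrightarrow> wft AWob AWgen x \<Longrightarrow> tcod x = m \<Longrightarrow> eqv AWob AWgen AW_rels (Comp f x) (Zer (tdom x) c)"
  by (rule zcl[where P=AWob and Q=AWgen and R=AW_rels]) (auto dest: hQ_AW)
lemma zcr_AS: "eqv ASob ASgen AS_rels f (Zer d m) \<Longrightarrow> wft ASob ASgen x \<Longrightarrow> tdom x = m \<Longrightarrow> eqv ASob ASgen AS_rels (Comp x f) (Zer d (tcod x))"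
  by (rule zcr[where P=ASob and Q=ASgen and R=AS_rels]) (auto dest: hQ_AS)
lemma zcr_AW: "eqv AWob AWgen AW_rels f (Zer d m) \<Longrightarrow> wft AWob AWgen x \<Longrightarrow> tdom x = m \<Longrightarrow> eqv AWob AWgen AW_rels (Comp x f) (Zer d (tcod x))"
  by (rule zcr[where P=AWob and Q=AWgen and R=AW_rels]) (auto dest: hQ_AW)
lemma ztl_AS: "eqv ASob ASgen AS_rels f (Zer d c) \<Longrightarrow> wft ASob ASgen x \<Longrightarrow> eqv ASob ASgen AS_rels (Tens f x) (Zer (d @ tdom x) (c @ tcod x))"
  by (rule ztl[where P=ASob and Q=ASgen and R=AS_rels]) (auto dest: hQ_AS)
lemma ztl_AW: "eqv AWob AWgen AW_rels f (Zer d c) \<Longrightarrow> wft AWob AWgen x \<Longrightarrow> eqv AWob AWgen AW_rels (Tens f x) (Zer (d @ tdom x) (c @ tcod x))"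
  by (rule ztl[where P=AWob and Q=AWgen and R=AW_rels]) (auto dest: hQ_AW)
lemma ztr_AS: "eqv ASob ASgen AS_rels f (Zer d c) \<Longrightarrow> wft ASob ASgen x \<Longrightarrow> eqv ASob ASgen AS_rels (Tens x f) (Zer (tdom x @ d) (tcod x @ c))"
  by (rule ztr[where P=ASob and Q=ASgen and R=AS_rels]) (auto dest: hQ_AS)
lemma ztr_AW: "eqv AWob AWgen AW_rels f (Zer d c) \<Longrightarrow> wft AWob AWgen x \<Longrightarrow> eqv AWob AWgen AW_rels (Tens x f) (Zer (tdom x @ d) (tcod x @ c))"
  by (rule ztr[where P=AWob and Q=AWgen and R=AW_rels]) (auto dest: hQ_AW)
lemma zadd_AS: "eqv ASob ASgen AS_rels f (Zer d c) \<Longrightarrow> eqv ASob ASgen AS_rels g (Zer d c) \<Longrightarrow> eqv ASob ASgen AS_rels (Add f g) (Zer d c)"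
  by (rule zadd[where P=ASob and Q=ASgen and R=AS_rels]) (auto dest: hQ_AS)
lemma zadd_AW: "eqv AWob AWgen AW_rels f (Zer d c) \<Longrightarrow> eqv AWob AWgen AW_rels g (Zer d c) \<Longrightarrow> eqv AWob AWgen AW_rels (Add f g) (Zer d c)"
  by (rule zadd[where P=AWob and Q=AWgen and R=AW_rels]) (auto dest: hQ_AW)
lemma zscal_AS: "eqv ASob ASgen AS_rels f (Zer d c) \<Longrightarrow> eqv ASob ASgen AS_rels (Scal a f) (Zer d c)"
  by (rule zscal[where P=ASob and Q=ASgen and R=AS_rels]) (auto dest: hQ_AS)
lemma zscal_AW: "eqv AWob AWgen AW_rels f (Zer d c) \<Longrightarrow> eqv AWob AWgen AW_rels (Scal a f) (Zer d c)"
  by (rule zscal[where P=AWob and Q=AWgen and R=AW_rels]) (auto dest: hQ_AW)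
lemma rcmis_AS: "wft ASob ASgen h \<Longrightarrow> rc (tdom h) \<noteq> rc (tcod h) \<Longrightarrow> eqv ASob ASgen AS_rels h (Zer (tdom h) (tcod h))"
  by (rule rcmis[where P=ASob and Q=ASgen and R=AS_rels]) (auto dest: hQ_AS simp: rc_gen)
lemma rcmis_AW: "wft AWob AWgen h \<Longrightarrow> rc (tdom h) \<noteq> rc (tcod h) \<Longrightarrow> eqv AWob AWgen AW_rels h (Zer (tdom h) (tcod h))"
  by (rule rcmis[where P=AWob and Q=AWgen and R=AW_rels]) (auto dest: hQ_AW simp: rc_gen)


lemma presAS: "AS_eq f g \<Longrightarrow> wft ASob ASgen f \<and> wft ASob ASgen g \<and> tdom f = tdom g \<and> tcod f = tcod g"
  by (rule eqv_pres[where P=ASob and Q=ASgen and R=AS_rels]) (auto dest: hQ_AS)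



lemma Phi_wft: "wft ASob ASgen h \<Longrightarrow> wft AWob AWgen (Phi h)"
proof (induction h)
  case (Gn g) then show ?case by (cases g) (auto simp: rd_def zr_def rdl_def ASob_AW)
qed (auto simp: rd_def zr_def ASob_AW ASob_AW2 Phi_dom)

lemma ZR: "wft ASob ASgen h \<Longrightarrow> rd h \<Longrightarrow> AW_eq (Phi h) (Zer (bl (tdom h)) (bl (tcod h)))"
proof (induction h)
  case (Idt a) then show ?case using ASob_AW[of a] by (auto simp: rd_def zr_def intro!: eqv.refl)
next
  case (Gn g) then show ?case using ASob_AW[of "gdom g"] ASob_AW[of "gcod g"] hQ_AS[of g] by (auto simp: rd_def zr_def intro!: eqv.refl)
next
  case (Zer d c) then show ?case using ASob_AW[of d] ASob_AW[of c] by (auto intro!: eqv.refl)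
next
  case (Comp f g)
  show ?case
  proof (cases "rd f")
    case True
    then have "AW_eq (Phi f) (Zer (bl (tdom f)) (bl (tcod f)))" using Comp by auto
    then show ?thesis using zcl_AW[of "Phi f" "bl (tdom f)" "bl (tcod f)" "Phi g"] Comp.prems
      by (auto simp: Phi_dom Phi_wft)
  next
    case False
    then have "rd g" using Comp.prems by (auto simp: rd_def)
    then have "AW_eq (Phi g) (Zer (bl (tdom g)) (bl (tcod g)))" using Comp by auto
    then show ?thesis using zcr_AW[of "Phi g" "bl (tdom g)" "bl (tcod g)" "Phi f"] Comp.prems
      by (auto simp: Phi_dom Phi_wft)
  qed
next
  case (Tens f g)
  show ?case
  proof (cases "rd f")
    case True
    then have "AW_eq (Phi f) (Zer (bl (tdom f)) (bl (tcod f)))" using Tens by auto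
    then show ?thesis using ztl_AW[of "Phi f" "bl (tdom f)" "bl (tcod f)" "Phi g"] Tens.prems
      by (auto simp: Phi_dom Phi_wft)
  next
    case False
    then have "rd g" using Tens.prems by (auto simp: rd_def)
    then have "AW_eq (Phi g) (Zer (bl (tdom g)) (bl (tcod g)))" using Tens by auto
    then show ?thesis using ztr_AW[of "Phi g" "bl (tdom g)" "bl (tcod g)" "Phi f"] Tens.prems
      by (auto simp: Phi_dom Phi_wft)
  qed
next
  case (Add f g)
  then have "AW_eq (Phi f) (Zer (bl (tdom f)) (bl (tcod f)))" "AW_eq (Phi g) (Zer (bl (tdom f)) (bl (tcod f)))"
    by (auto simp: rd_def)
  then show ?case using zadd_AW by auto
next
  case (Scal a f)
  then show ?case using zscal_AW by (auto simp: rd_def)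
qed

lemma obWS: "AWob x \<Longrightarrow> ASob x" by (cases x) auto
lemma genWS: "AWgen x \<Longrightarrow> ASgen x" by (cases x) auto
lemma relWS: "AW_rels \<subseteq> AS_rels" by (auto simp: AS_rels_def)
lemma W2S: "AW_eq f g \<Longrightarrow> AS_eq f g" using eqv_mono obWS genWS relWS by metis
lemma wW2S: "wft AWob AWgen f \<Longrightarrow> wft ASob ASgen f" using wft_mono obWS genWS by metis

lemma full: "wft ASob ASgen h \<Longrightarrow> \<not> rd h \<Longrightarrow> AS_eq (Phi h) h"
proof (induction h)
  case (Idt a) then show ?case by (auto simp: rd_def intro: eqv.refl)
next
  case (Gn g) then show ?case by (auto simp: rd_def intro: eqv.refl)
next
  case (Zer d c) then show ?case by (auto simp: rd_def bl_id intro: eqv.refl)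
next
  case (Comp f g)
  show ?case
  proof (cases "rdl (tdom f)")
    case True
    have "rc (tdom g) \<noteq> rc (tcod g)" using True Comp.prems by (auto simp: rd_def rdl_rc)
    then have "AS_eq g (Zer (tdom g) (tcod g))" using rcmis_AS[of g] Comp.prems rc_gen by auto
    then have 1: "AS_eq (Comp f g) (Zer (tdom g) (tcod f))"
      using zcr_AS[of g "tdom g" "tcod g" f] Comp.prems by auto
    have "rd f" using True by (simp add: rd_def)
    then have "AW_eq (Phi f) (Zer (bl (tdom f)) (bl (tcod f)))" using ZR[of f] Comp.prems by simp
    then have "AS_eq (Phi f) (Zer (bl (tdom f)) (bl (tcod f)))" by (rule W2S)
    then have 2: "AS_eq (Comp (Phi f) (Phi g)) (Zer (tdom g) (tcod f))"
      using zcl_AS[of "Phi f" "bl (tdom f)" "bl (tcod f)" "Phi g"] Comp.prems wW2S[OF Phi_wft[of g]]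
      by (auto simp: Phi_dom rd_def bl_id)
    show ?thesis using eqv.trans[OF 2 eqv.sym[OF 1]] by simp
  next
    case False
    then show ?thesis using Comp by (auto simp: rd_def Phi_dom bl_id intro!: eqv.cong_comp)
  qed
next
  case (Tens f g) then show ?case by (auto simp: rd_def intro!: eqv.cong_tens)
next
  case (Add f g) then show ?case by (auto simp: rd_def Phi_dom bl_id intro!: eqv.cong_add)
next
  case (Scal a f) then show ?case by (auto simp: rd_def intro!: eqv.cong_scal)
qed


fun nored :: "'k tm \<Rightarrow> bool" where
  "nored (Idt a) = (\<not> rdl a)"
| "nored (Gn g) = (\<not> rd (Gn g))"
| "nored (Comp f g) = (nored f \<and> nored g)"
| "nored (Tens f g) = (nored f \<and> nored g)"
| "nored (Zer d c) = (\<not> rdl d \<and> \<not> rdl c)"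
| "nored (Add f g) = (nored f \<and> nored g)"
| "nored (Scal k f) = nored f"

lemma nored_Phi: "nored f \<Longrightarrow> Phi f = f"
  by (induction f) (auto simp: bl_id)

lemma nored_wft: "wft ASob ASgen f \<Longrightarrow> nored f \<Longrightarrow> wft AWob AWgen f"
proof (induction f)
  case (Gn g) then show ?case by (cases g) (auto simp: rd_def rdl_def)
qed (auto simp: ASob_AW2)

lemma nored_dom: "nored f \<Longrightarrow> \<not> rd f"
  by (induction f) (auto simp: rd_def)

lemma rdl_blk[simp]: "\<not> rdl (blk a)" by (simp add: rdl_def blk_def)

lemma nored_basic[simp]: "nored (mrg a b)" "nored (spl a b)" "nored (crs a b)" "nored (dot a)"
  "nored (idb a)"
  by (auto simp: mrg_def spl_def crs_def dot_def idb_def rd_def rdl_def blk_def)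

lemma nored_tsum[simp]: "nored (tsum d c fs) = (\<not> rdl d \<and> \<not> rdl c \<and> (\<forall>f\<in>set fs. nored f))"
  by (induction fs) (auto simp: tsum_def)

lemma nored_tcomps[simp]: "fs \<noteq> [] \<Longrightarrow> nored (tcomps fs) = (\<forall>f\<in>set fs. nored f)"
  by (induction fs rule: tcomps.induct) auto

lemma nored_it[simp]: "nored (mrg_it n)" "nored (spl_it n)" "nored (dots n)"
  by (induction n) (auto simp: rdl_def)

lemma AW_rels_nored: "(f, g) \<in> AW_rels \<Longrightarrow> nored f \<and> nored g"
  by (auto simp: AW_rels_def R1_def R2_def R3_def R4_def R5_def R6_def rdl_def)


lemma AS_only_rd: "(f, g) \<in> AS_rels \<Longrightarrow> (f, g) \<notin> AW_rels \<Longrightarrow> rd f"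
  by (auto simp: AS_rels_def R7_def R8_def R9_def trU_def trD_def rd_def rdl_def idb_def blk_def
      spl_def mrg_def idr_def)

lemma faith_aux: "AS_eq f g \<Longrightarrow> \<not> rd f \<Longrightarrow> AW_eq (Phi f) (Phi g)"
proof (induction rule: eqv.induct)
  case (refl f) then show ?case using Phi_wft by (auto intro: eqv.refl)
next
  case (sym f g) then show ?case using presAS[of f g] by (auto simp: rd_def intro: eqv.sym)
next
  case (trans f g h) then show ?case using presAS[of f g] by (auto simp: rd_def intro: eqv.trans)
next
  case (cong_comp f f' g g')
  note pf = presAS[OF cong_comp(1)] and pg = presAS[OF cong_comp(2)]
  show ?case
  proof (cases "rdl (tdom f)")
    case False
    then show ?thesis using cong_comp pf pg by (auto simp: rd_def Phi_dom intro!: eqv.cong_comp)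
  next
    case True
    have z1: "AW_eq (Phi f) (Zer (bl (tdom f)) (bl (tcod f)))" using ZR[of f] pf True by (simp add: rd_def)
    have z2: "AW_eq (Phi f') (Zer (bl (tdom f)) (bl (tcod f)))" using ZR[of f'] pf True by (simp add: rd_def)
    have a: "AW_eq (Comp (Phi f) (Phi g)) (Zer (bl (tdom g)) (bl (tcod f)))"
      using zcl_AW[OF z1, of "Phi g"] pg cong_comp.hyps(3) Phi_wft[of g] by (simp add: Phi_dom)
    have b: "AW_eq (Comp (Phi f') (Phi g')) (Zer (bl (tdom g)) (bl (tcod f)))"
      using zcl_AW[OF z2, of "Phi g'"] pg pf cong_comp.hyps(3) Phi_wft[of g'] by (simp add: Phi_dom)
    show ?thesis using eqv.trans[OF a eqv.sym[OF b]] by simp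
  qed
next
  case (cong_tens f f' g g')
  then show ?case using presAS[OF cong_tens(1)] presAS[OF cong_tens(2)]
    by (auto simp: rd_def intro!: eqv.cong_tens)
next
  case (cong_add f f' g g')
  then show ?case using presAS[OF cong_add(1)] presAS[OF cong_add(2)]
    by (auto simp: rd_def Phi_dom intro!: eqv.cong_add)
next
  case (cong_scal f f' c)
  then show ?case by (auto simp: rd_def intro!: eqv.cong_scal)
next
  case (comp_assoc f g h)
  then show ?case using Phi_wft[of f] Phi_wft[of g] Phi_wft[of h]
    by (auto simp: Phi_dom intro!: eqv.comp_assoc)
next
  case (comp_id_l f)
  then show ?case using Phi_wft[of f] eqv.comp_id_l[of AWob AWgen "Phi f" AW_rels]
    by (auto simp: Phi_dom rd_def bl_id)
next
  case (comp_id_r f)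
  then show ?case using Phi_wft[of f] eqv.comp_id_r[of AWob AWgen "Phi f" AW_rels]
    by (auto simp: Phi_dom rd_def bl_id)
next
  case (tens_assoc f g h)
  then show ?case using Phi_wft[of f] Phi_wft[of g] Phi_wft[of h]
    by (auto intro!: eqv.tens_assoc)
next
  case (tens_unit_l f)
  then show ?case using Phi_wft[of f] eqv.tens_unit_l[of AWob AWgen "Phi f" AW_rels]
    by (auto simp: rdl_def)
next
  case (tens_unit_r f)
  then show ?case using Phi_wft[of f] eqv.tens_unit_r[of AWob AWgen "Phi f" AW_rels]
    by (auto simp: rdl_def)
next
  case (tens_id a b)
  then show ?case using eqv.tens_id[of AWob a b AWgen AW_rels] ASob_AW2[of a] ASob_AW2[of b]
    by (auto simp: rd_def)
next
  case (interchange f f' g g')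
  then show ?case using Phi_wft[of f] Phi_wft[of g] Phi_wft[of f'] Phi_wft[of g']
    by (auto simp: Phi_dom intro!: eqv.interchange)
next
  case (add_assoc f g h)
  then show ?case using Phi_wft[of f] Phi_wft[of g] Phi_wft[of h]
    by (auto simp: Phi_dom intro!: eqv.add_assoc)
next
  case (add_comm f g)
  then show ?case using Phi_wft[of f] Phi_wft[of g]
    by (auto simp: Phi_dom intro!: eqv.add_comm)
next
  case (add_zero f)
  then show ?case using Phi_wft[of f] eqv.add_zero[of AWob AWgen "Phi f" AW_rels]
    by (auto simp: Phi_dom)
next
  case (scal_one f)
  then show ?case using Phi_wft[of f] by (auto intro!: eqv.scal_one)
next
  case (scal_zero f)
  then show ?case using Phi_wft[of f] eqv.scal_zero[of AWob AWgen "Phi f" AW_rels]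
    by (auto simp: Phi_dom)
next
  case (scal_scal f a b)
  then show ?case using Phi_wft[of f] by (auto intro!: eqv.scal_scal)
next
  case (scal_add_l f a b)
  then show ?case using Phi_wft[of f] by (auto intro!: eqv.scal_add_l)
next
  case (scal_add_r f g a)
  then show ?case using Phi_wft[of f] Phi_wft[of g] by (auto simp: Phi_dom intro!: eqv.scal_add_r)
next
  case (comp_add_l f g h)
  then show ?case using Phi_wft[of f] Phi_wft[of g] Phi_wft[of h]
    by (auto simp: Phi_dom intro!: eqv.comp_add_l)
next
  case (comp_add_r h f g)
  then show ?case using Phi_wft[of f] Phi_wft[of g] Phi_wft[of h]
    by (auto simp: Phi_dom intro!: eqv.comp_add_r)
next
  case (comp_scal_l f g c)
  then show ?case using Phi_wft[of f] Phi_wft[of g]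
    by (auto simp: Phi_dom intro!: eqv.comp_scal_l)
next
  case (comp_scal_r f g c)
  then show ?case using Phi_wft[of f] Phi_wft[of g]
    by (auto simp: Phi_dom intro!: eqv.comp_scal_r)
next
  case (tens_add_l f g h)
  then show ?case using Phi_wft[of f] Phi_wft[of g] Phi_wft[of h]
    by (auto simp: Phi_dom intro!: eqv.tens_add_l)
next
  case (tens_add_r h f g)
  then show ?case using Phi_wft[of f] Phi_wft[of g] Phi_wft[of h]
    by (auto simp: Phi_dom intro!: eqv.tens_add_r)
next
  case (tens_scal_l f g c)
  then show ?case using Phi_wft[of f] Phi_wft[of g] by (auto intro!: eqv.tens_scal_l)
next
  case (tens_scal_r f g c)
  then show ?case using Phi_wft[of f] Phi_wft[of g] by (auto intro!: eqv.tens_scal_r)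
next
  case (rel f g)
  then have r: "(f, g) \<in> AW_rels" using AS_only_rd by blast
  then have "nored f" "nored g" using AW_rels_nored by auto
  moreover have "Phi f = f" "Phi g = g" using nored_Phi \<open>nored f\<close> \<open>nored g\<close> by auto
  ultimately show ?case using r rel nored_wft by (auto intro!: eqv.rel)
qed

lemma faith: "AS_eq f g \<Longrightarrow> AW_eq (Phi f) (Phi g)"
proof (cases "rd f")
  case True
  assume e: "AS_eq f g"
  note p = presAS[OF e]
  have "AW_eq (Phi f) (Zer (bl (tdom f)) (bl (tcod f)))" using ZR[of f] p True by simp
  moreover have "AW_eq (Phi g) (Zer (bl (tdom f)) (bl (tcod f)))" using ZR[of g] p True by (simp add: rd_def)
  ultimately show ?thesis by (blast intro: eqv.trans eqv.sym)
qed (rule faith_aux)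


lemma AWob_nrdl: "list_all AWob a \<Longrightarrow> \<not> rdl a"
proof (induction a)
  case (Cons x xs) then show ?case by (cases x) (auto simp: rdl_def)
qed (simp add: rdl_def)

lemma AW_nored: "wft AWob AWgen f \<Longrightarrow> nored f"
proof (induction f)
  case (Gn g) then show ?case by (cases g) (auto simp: rd_def rdl_def)
qed (auto simp: AWob_nrdl)

theorem corollary3p16:
  shows "(\<forall>f g :: 'k::comm_ring_1 tm. wft AWob AWgen f \<longrightarrow> wft AWob AWgen g
            \<longrightarrow> AW_eq f g \<longrightarrow> AS_eq f g)
       \<and> (\<forall>f g :: 'k tm. wft AWob AWgen f \<longrightarrow> wft AWob AWgen g
            \<longrightarrow> tdom f = tdom g \<longrightarrow> tcod f = tcod g
            \<longrightarrow> AS_eq f g \<longrightarrow> AW_eq f g)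
       \<and> (\<forall>h :: 'k tm. wft ASob ASgen h \<longrightarrow> list_all AWob (tdom h) \<longrightarrow> list_all AWob (tcod h)
            \<longrightarrow> (\<exists>f. wft AWob AWgen f \<and> tdom f = tdom h \<and> tcod f = tcod h \<and> AS_eq f h))"
proof (intro conjI allI impI)
  fix f g :: "'k tm"
  assume "AW_eq f g" then show "AS_eq f g" by (rule W2S)
next
  fix f g :: "'k tm"
  assume f: "wft AWob AWgen f" and g: "wft AWob AWgen g" and e: "AS_eq f g"
  have "Phi f = f" "Phi g = g" using nored_Phi AW_nored f g by auto
  then show "AW_eq f g" using faith[OF e] by simp
next
  fix h :: "'k tm"
  assume h: "wft ASob ASgen h" and d: "list_all AWob (tdom h)" and c: "list_all AWob (tcod h)"
  have nr: "\<not> rd h" using AWob_nrdl d c by (auto simp: rd_def)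
  show "\<exists>f. wft AWob AWgen f \<and> tdom f = tdom h \<and> tcod f = tcod h \<and> AS_eq f h"
    using Phi_wft[OF h] full[OF h nr] Phi_dom[of h] bl_id AWob_nrdl d c by (intro exI[of _ "Phi h"]) auto
qed

end
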